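(* Assume $\gamma=0$, $L$ is conformal, and $r,s$ are not both roots of unity. Suppose $\mathcal S(r,s)$ is generated by $(jm,m)$ for some integers $j\ge0$, $m>0$ (so $s^m=r^{jm}$), and that $\psi(h)=Ch^j$ with $C\neq0$. Let $M$ be a simple $L$-module with $hM=HM=M$. If $H^m-C^mh^{jm}\in\operatorname{ann}M$, then $\operatorname{ann}M$ contains $u^m$ or $d^m$.
   Context: Let $r,s\in\mathbb C^\times$, $\phi\in\mathbb C[x]$, and $L=L(\phi,r,s,0)$ the associative $\mathbb C$-algebra generated by $u,d,h$ with $hu=ruh$, $dh=rhd$, $du-sud=\phi(h)$. $L$ is conformal if there is $\psi\in\mathbb C[x]$ with $s\psi(x)-\psi(rx)=\phi(x)$; fix such $\psi$ and set $H=ud+\psi(h)$. $\mathcal S(r,s)=\{(i,j)\in\mathbb Z\times\mathbb Z: r^i=s^j\}$, an additive subgroup of $\mathbb Z^2$, which is cyclic when $r,s$ are not both roots of unity. Modules are left modules. *)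

theory Defs
  imports Complex_Main "HOL-Computational_Algebra.Polynomial"
begin

text \<open>A module over the down-up algebra L(phi,r,s,0) is a complex vector space M
(scalar multiplication sc) with linear operators U, D, Hh (actions of u, d, h)
satisfying the defining relations.\<close>

definition poly_op :: "(complex \<Rightarrow> 'm \<Rightarrow> 'm) \<Rightarrow> complex poly \<Rightarrow> ('m \<Rightarrow> 'm) \<Rightarrow> 'm \<Rightarrow> ('m::ab_group_add)"
  where "poly_op sc p T x = (\<Sum>i\<le>degree p. sc (coeff p i) ((T ^^ i) x))"

definition downup_module ::
  "(complex \<Rightarrow> 'm::ab_group_add \<Rightarrow> 'm) \<Rightarrow> complex poly \<Rightarrow> complex \<Rightarrow> complex \<Rightarrow>
   ('m \<Rightarrow> 'm) \<Rightarrow> ('m \<Rightarrow> 'm) \<Rightarrow> ('m \<Rightarrow> 'm) \<Rightarrow> bool" where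
  "downup_module sc phi r s U D Hh \<longleftrightarrow>
     vector_space sc \<and>
     Vector_Spaces.linear sc sc U \<and> Vector_Spaces.linear sc sc D \<and> Vector_Spaces.linear sc sc Hh \<and>
     (\<forall>x. Hh (U x) = sc r (U (Hh x))) \<and>
     (\<forall>x. D (Hh x) = sc r (Hh (D x))) \<and>
     (\<forall>x. D (U x) - sc s (U (D x)) = poly_op sc phi Hh x)"

definition simple_downup_module ::
  "(complex \<Rightarrow> 'm::ab_group_add \<Rightarrow> 'm) \<Rightarrow> complex poly \<Rightarrow> complex \<Rightarrow> complex \<Rightarrow>
   ('m \<Rightarrow> 'm) \<Rightarrow> ('m \<Rightarrow> 'm) \<Rightarrow> ('m::ab_group_add \<Rightarrow> 'm) \<Rightarrow> bool" where
  "simple_downup_module sc phi r s U D Hh \<longleftrightarrow>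
     downup_module sc phi r s U D Hh \<and>
     (\<exists>x::'m. x \<noteq> 0) \<and>
     (\<forall>N. module.subspace sc N \<and> U ` N \<subseteq> N \<and> D ` N \<subseteq> N \<and> Hh ` N \<subseteq> N
          \<longrightarrow> N = {0} \<or> N = UNIV)"

definition S_rs :: "complex \<Rightarrow> complex \<Rightarrow> (int \<times> int) set" where
  "S_rs r s = {(i, k). r powi i = s powi k}"

definition root_of_unity :: "complex \<Rightarrow> bool" where
  "root_of_unity z \<longleftrightarrow> (\<exists>n::nat. n > 0 \<and> z ^ n = 1)"

end

theory Submission
  imports Defs
begin

locale dmod = vector_space sc for sc :: "complex \<Rightarrow> 'm::ab_group_add \<Rightarrow> 'm" +
  fixes U D Hh :: "'m \<Rightarrow> 'm" and r s C :: complex and j m :: nat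
  assumes U_add: "U (x + y) = U x + U y" and U_sc: "U (sc a x) = sc a (U x)"
    and D_add: "D (x + y) = D x + D y" and D_sc: "D (sc a x) = sc a (D x)"
    and Hh_add: "Hh (x + y) = Hh x + Hh y" and Hh_sc: "Hh (sc a x) = sc a (Hh x)"
    and r0: "r \<noteq> 0" and s0: "s \<noteq> 0" and C0: "C \<noteq> 0"
    and hu: "Hh (U x) = sc r (U (Hh x))"
    and dh: "D (Hh x) = sc r (Hh (D x))"
    and du: "D (U x) - sc s (U (D x)) = sc (C * (s - r ^ j)) ((Hh ^^ j) x)"
    and ann0: "((\<lambda>y. U (D y) + sc C ((Hh ^^ j) y)) ^^ m) x = sc (C ^ m) ((Hh ^^ (j * m)) x)"
    and m_pos: "m > 0"
    and rm: "r ^ (j * m) = s ^ m"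
    and prim: "0 < k \<Longrightarrow> k < m \<Longrightarrow> r ^ (j * k) \<noteq> s ^ k"
    and simple: "subspace N \<Longrightarrow> U ` N \<subseteq> N \<Longrightarrow> D ` N \<subseteq> N \<Longrightarrow> Hh ` N \<subseteq> N \<Longrightarrow> N = {0} \<or> N = UNIV"
    and nz: "\<exists>x::'m. x \<noteq> 0"
    and hsurj: "surj Hh"
begin

definition lin :: "('m \<Rightarrow> 'm) \<Rightarrow> bool" where
  "lin f \<longleftrightarrow> (\<forall>x y. f (x + y) = f x + f y) \<and> (\<forall>a x. f (sc a x) = sc a (f x))"

lemma lin_add: "lin f \<Longrightarrow> f (x + y) = f x + f y" by (simp add: lin_def)
lemma lin_sc: "lin f \<Longrightarrow> f (sc a x) = sc a (f x)" by (simp add: lin_def)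
lemma lin_zero: "lin f \<Longrightarrow> f 0 = 0"
  using lin_sc[of f 0 0] by simp
lemma lin_neg: "lin f \<Longrightarrow> f (- x) = - f x"
  using lin_sc[of f "-1" x] by simp
lemma lin_diff: "lin f \<Longrightarrow> f (x - y) = f x - f y"
  using lin_add[of f "x - y" y] by (simp add: eq_diff_eq)
lemma lin_sum: "lin f \<Longrightarrow> f (sum g A) = (\<Sum>a\<in>A. f (g a))"
  by (induct A rule: infinite_finite_induct) (simp_all add: lin_zero lin_add)
lemma lin_comp: "lin f \<Longrightarrow> lin g \<Longrightarrow> lin (\<lambda>x. f (g x))"
  by (simp add: lin_def)
lemma lin_pow: "lin f \<Longrightarrow> lin (f ^^ n)"
  by (induct n) (simp_all add: lin_def)
lemma lin_plus: "lin f \<Longrightarrow> lin g \<Longrightarrow> lin (\<lambda>x. f x + g x)"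
  unfolding lin_def by (simp add: add_ac scale_right_distrib)
lemma lin_scale: "lin f \<Longrightarrow> lin (\<lambda>x. sc c (f x))"
  unfolding lin_def by (simp add: scale_right_distrib mult.commute)

lemma lin_U: "lin U" and lin_D: "lin D" and lin_Hh: "lin Hh"
  by (auto simp: lin_def U_add U_sc D_add D_sc Hh_add Hh_sc)

definition B :: "'m \<Rightarrow> 'm" where "B x = sc C ((Hh ^^ j) x)"
definition H :: "'m \<Rightarrow> 'm" where "H x = U (D x) + B x"

lemma lin_B: "lin B"
  unfolding B_def by (intro lin_scale lin_pow lin_Hh)
lemma lin_H: "lin H"
  unfolding H_def by (rule lin_plus[OF lin_comp[OF lin_U lin_D] lin_B])

lemma ann: "(H ^^ m) x = sc (C ^ m) ((Hh ^^ (j * m)) x)"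
proof -
  have "H = (\<lambda>y. U (D y) + sc C ((Hh ^^ j) y))" by (auto simp: H_def B_def)
  thus ?thesis using ann0 by simp
qed

lemma kernel_simple:
  assumes "lin f" and "\<And>x. f x = 0 \<Longrightarrow> f (U x) = 0" and "\<And>x. f x = 0 \<Longrightarrow> f (D x) = 0"
    and "\<And>x. f x = 0 \<Longrightarrow> f (Hh x) = 0"
  shows "(\<forall>x. f x = 0 \<longrightarrow> x = 0) \<or> (\<forall>x. f x = 0)"
proof -
  have "subspace {x. f x = 0}"
    by (rule subspaceI) (auto simp: lin_zero lin_add lin_sc assms(1))
  moreover have "U ` {x. f x = 0} \<subseteq> {x. f x = 0}" "D ` {x. f x = 0} \<subseteq> {x. f x = 0}"
    "Hh ` {x. f x = 0} \<subseteq> {x. f x = 0}" using assms by auto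
  ultimately have "{x. f x = 0} = {0} \<or> {x. f x = 0} = UNIV" by (rule simple)
  thus ?thesis by auto
qed

lemma Hh_inj: "Hh x = 0 \<Longrightarrow> x = 0"
proof -
  have "(\<forall>x. Hh x = 0 \<longrightarrow> x = 0) \<or> (\<forall>x. Hh x = 0)"
  proof (rule kernel_simple[OF lin_Hh])
    fix x assume "Hh x = 0"
    then show "Hh (U x) = 0" using hu[of x] lin_zero[OF lin_U] by simp
    show "Hh (Hh x) = 0" using \<open>Hh x = 0\<close> lin_zero[OF lin_Hh] by simp
    have "sc r (Hh (D x)) = 0" using dh[of x] \<open>Hh x = 0\<close> lin_zero[OF lin_D] by simp
    then show "Hh (D x) = 0" using r0 by simp
  qed
  moreover have "\<not> (\<forall>x. Hh x = 0)"
  proof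
    assume A: "\<forall>x. Hh x = 0"
    obtain y :: 'm where y: "y \<noteq> 0" using nz by blast
    obtain x where "y = Hh x" using hsurj unfolding surj_def by blast
    then show False using A y by simp
  qed
  ultimately show "Hh x = 0 \<Longrightarrow> x = 0" by auto
qed

lemma Hhpow_inj: "(Hh ^^ k) x = 0 \<Longrightarrow> x = 0"
  by (induct k arbitrary: x) (auto dest: Hh_inj)

lemma B_inj: "B x = 0 \<Longrightarrow> x = 0"
  using C0 Hhpow_inj by (auto simp: B_def)

lemma Bpow_inj: "(B ^^ k) x = 0 \<Longrightarrow> x = 0"
  by (induct k arbitrary: x) (auto dest: B_inj)

lemma hpow_U: "(Hh ^^ k) (U x) = sc (r ^ k) (U ((Hh ^^ k) x))"
  by (induct k) (auto simp: hu lin_sc[OF lin_Hh] mult.commute)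

lemma D_hpow: "D ((Hh ^^ k) x) = sc (r ^ k) ((Hh ^^ k) (D x))"
proof (induct k)
  case (Suc k)
  have "D ((Hh ^^ Suc k) x) = D (Hh ((Hh ^^ k) x))" by simp
  also have "\<dots> = sc r (Hh (sc (r ^ k) ((Hh ^^ k) (D x))))" using dh Suc by simp
  also have "\<dots> = sc (r ^ Suc k) ((Hh ^^ Suc k) (D x))" by (simp add: lin_sc[OF lin_Hh])
  finally show ?case .
qed simp

lemma B_U: "B (U x) = sc (r ^ j) (U (B x))"
  by (simp add: B_def hpow_U lin_sc[OF lin_U] mult.commute)

lemma D_B: "D (B x) = sc (r ^ j) (B (D x))"
  by (simp add: B_def D_hpow lin_sc[OF lin_D] lin_sc[OF lin_Hh] lin_sc[OF lin_pow[OF lin_Hh]] mult.commute)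

lemma DU: "D (U x) = sc s (H x) - sc (r ^ j) (B x)"
proof -
  have "D (U x) = sc s (U (D x)) + sc (C * (s - r ^ j)) ((Hh ^^ j) x)"
    using du[of x] by (simp add: algebra_simps)
  also have "\<dots> = sc s (H x) - sc (r ^ j) (B x)"
    by (simp add: H_def B_def algebra_simps)
  finally show ?thesis .
qed

lemma H_U: "H (U x) = sc s (U (H x))"
proof -
  have "H (U x) = U (D (U x)) + B (U x)" by (simp add: H_def)
  also have "\<dots> = U (sc s (H x) - sc (r ^ j) (B x)) + sc (r ^ j) (U (B x))" by (simp add: DU B_U)
  also have "\<dots> = sc s (U (H x))" by (simp add: lin_diff[OF lin_U] lin_sc[OF lin_U])
  finally show ?thesis .
qed

lemma D_H: "D (H x) = sc s (H (D x))"
proof -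
  have "D (H x) = D (U (D x)) + D (B x)" by (simp add: H_def lin_add[OF lin_D])
  also have "\<dots> = sc s (H (D x))" by (simp add: DU D_B)
  finally show ?thesis .
qed

lemma H_Hh: "H (Hh x) = Hh (H x)"
proof -
  have "U (D (Hh x)) = Hh (U (D x))" by (simp add: dh hu lin_sc[OF lin_U])
  moreover have "B (Hh x) = Hh (B x)"
    by (simp add: B_def lin_sc[OF lin_Hh] funpow_swap1)
  ultimately show ?thesis by (simp add: H_def lin_add[OF lin_Hh])
qed

lemma H_Hhpow: "H ((Hh ^^ k) x) = (Hh ^^ k) (H x)"
  by (induct k) (auto simp: H_Hh)

lemma H_B: "H (B x) = B (H x)"
  by (simp add: B_def lin_sc[OF lin_H] H_Hhpow)

lemma Hpow_B: "(H ^^ k) (B x) = B ((H ^^ k) x)"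
  by (induct k) (auto simp: H_B)

lemma Bpow_Hpow: "(B ^^ i) ((H ^^ k) x) = (H ^^ k) ((B ^^ i) x)"
  by (induct i) (auto simp: Hpow_B)

lemma H_Upow: "H ((U ^^ k) x) = sc (s ^ k) ((U ^^ k) (H x))"
  by (induct k) (auto simp: H_U lin_sc[OF lin_U] mult.commute)

lemma B_Upow: "B ((U ^^ k) x) = sc (r ^ (j * k)) ((U ^^ k) (B x))"
  by (induct k) (auto simp: B_U lin_sc[OF lin_U] power_add mult.commute)

lemma Dpow_H: "(D ^^ k) (H x) = sc (s ^ k) (H ((D ^^ k) x))"
  by (induct k) (auto simp: D_H lin_sc[OF lin_H] lin_sc[OF lin_D] mult.commute)

lemma Dpow_B: "(D ^^ k) (B x) = sc (r ^ (j * k)) (B ((D ^^ k) x))"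
  by (induct k) (auto simp: D_B lin_sc[OF lin_B] lin_sc[OF lin_D] power_add mult.commute)

lemma Hh_Upow: "Hh ((U ^^ k) x) = sc (r ^ k) ((U ^^ k) (Hh x))"
  by (induct k) (auto simp: hu lin_sc[OF lin_U] mult.commute)

lemma Dpow_Hh: "(D ^^ k) (Hh x) = sc (r ^ k) (Hh ((D ^^ k) x))"
  by (induct k) (auto simp: dh lin_sc[OF lin_Hh] lin_sc[OF lin_D] mult.commute)


lemma D_Usuc: "D ((U ^^ Suc k) x) = sc (s ^ Suc k) ((U ^^ k) (H x)) - sc (r ^ (j * Suc k)) ((U ^^ k) (B x))"
proof -
  have "D ((U ^^ Suc k) x) = D (U ((U ^^ k) x))" by simp
  also have "\<dots> = sc s (H ((U ^^ k) x)) - sc (r ^ j) (B ((U ^^ k) x))" by (rule DU)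
  also have "\<dots> = sc (s ^ Suc k) ((U ^^ k) (H x)) - sc (r ^ (j * Suc k)) ((U ^^ k) (B x))"
    by (simp add: H_Upow B_Upow power_add)
  finally show ?thesis .
qed

lemma D_Um: "D ((U ^^ m) x) = sc (s ^ m) ((U ^^ m) (D x))"
proof -
  obtain k where k: "m = Suc k" using m_pos by (cases m) auto
  have "D ((U ^^ m) x) = sc (s ^ m) ((U ^^ k) (H x)) - sc (s ^ m) ((U ^^ k) (B x))"
    using D_Usuc[of k x] rm k by simp
  also have "\<dots> = sc (s ^ m) ((U ^^ k) (H x - B x))"
    by (simp add: lin_diff[OF lin_pow[OF lin_U]] scale_right_diff_distrib)
  also have "\<dots> = sc (s ^ m) ((U ^^ m) (D x))"
    by (simp add: k H_def funpow_Suc_right del: funpow.simps)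
  finally show ?thesis .
qed

lemma Dm_U: "(D ^^ m) (U x) = sc (s ^ m) (U ((D ^^ m) x))"
proof -
  obtain k where k: "m = Suc k" using m_pos by (cases m) auto
  have "(D ^^ m) (U x) = (D ^^ k) (D (U x))" by (simp add: k funpow_Suc_right del: funpow.simps)
  also have "\<dots> = (D ^^ k) (sc s (H x) - sc (r ^ j) (B x))" by (simp add: DU)
  also have "\<dots> = sc (s ^ Suc k) (H ((D ^^ k) x)) - sc (r ^ (j * Suc k)) (B ((D ^^ k) x))"
    by (simp add: lin_diff[OF lin_pow[OF lin_D]] lin_sc[OF lin_pow[OF lin_D]] Dpow_H Dpow_B power_add)
  also have "\<dots> = sc (s ^ m) (H ((D ^^ k) x) - B ((D ^^ k) x))"
    using rm k by (simp add: scale_right_diff_distrib)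
  also have "\<dots> = sc (s ^ m) (U ((D ^^ m) x))"
    by (simp add: k H_def)
  finally show ?thesis .
qed

lemma U_case: "(\<forall>x. (U ^^ m) x = 0 \<longrightarrow> x = 0) \<or> (\<forall>x. (U ^^ m) x = 0)"
proof (rule kernel_simple[OF lin_pow[OF lin_U]])
  fix x assume A: "(U ^^ m) x = 0"
  show "(U ^^ m) (U x) = 0" using A by (simp add: funpow_swap1[symmetric] lin_zero[OF lin_U])
  have "sc (s ^ m) ((U ^^ m) (D x)) = 0" using D_Um[of x] A lin_zero[OF lin_D] by simp
  then show "(U ^^ m) (D x) = 0" using s0 by simp
  have "sc (r ^ m) ((U ^^ m) (Hh x)) = 0" using Hh_Upow[of m x] A lin_zero[OF lin_Hh] by simp
  then show "(U ^^ m) (Hh x) = 0" using r0 by simp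
qed

lemma D_case: "(\<forall>x. (D ^^ m) x = 0 \<longrightarrow> x = 0) \<or> (\<forall>x. (D ^^ m) x = 0)"
proof (rule kernel_simple[OF lin_pow[OF lin_D]])
  fix x assume A: "(D ^^ m) x = 0"
  show "(D ^^ m) (D x) = 0" using A by (simp add: funpow_swap1[symmetric] lin_zero[OF lin_D])
  show "(D ^^ m) (U x) = 0" using Dm_U[of x] A lin_zero[OF lin_U] by simp
  show "(D ^^ m) (Hh x) = 0" using Dpow_Hh[of m x] A lin_zero[OF lin_Hh] by simp
qed

definition \<omega> :: complex where "\<omega> = r ^ j / s"

lemma \<omega>m: "\<omega> ^ m = 1"
  using rm s0 by (simp add: \<omega>_def power_divide power_mult[symmetric])

lemma \<omega>prim: "0 < k \<Longrightarrow> k < m \<Longrightarrow> \<omega> ^ k \<noteq> 1"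
  using prim[of k] s0 by (simp add: \<omega>_def power_divide power_mult[symmetric])

lemma Bpow: "(B ^^ k) x = sc (C ^ k) ((Hh ^^ (j * k)) x)"
proof (induct k)
  case (Suc k)
  have "(B ^^ Suc k) x = B ((B ^^ k) x)" by simp
  also have "\<dots> = sc C ((Hh ^^ j) (sc (C ^ k) ((Hh ^^ (j * k)) x)))"
    by (simp only: Suc B_def)
  also have "\<dots> = sc (C ^ Suc k) ((Hh ^^ (j * Suc k)) x)"
    by (simp add: lin_sc[OF lin_pow[OF lin_Hh]] funpow_add)
  finally show ?case .
qed simp

lemma HmBm: "(H ^^ m) x = (B ^^ m) x"
  by (simp add: ann Bpow mult.commute)

context
  assumes U_inj: "\<And>x. U x = 0 \<Longrightarrow> x = 0" and D_inj: "\<And>x. D x = 0 \<Longrightarrow> x = 0"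
begin

lemma Dpow_inj: "(D ^^ k) x = 0 \<Longrightarrow> x = 0"
  by (induct k arbitrary: x) (auto dest: D_inj)

lemma eig_shift:
  assumes "H z = sc q (B z)" shows "H (D z) = sc (q * \<omega>) (B (D z))"
proof -
  have "sc s (H (D z)) = D (H z)" by (simp add: D_H)
  also have "\<dots> = sc (q * r ^ j) (B (D z))" using assms by (simp add: lin_sc[OF lin_D] D_B)
  finally have "sc (1 / s) (sc s (H (D z))) = sc (1 / s) (sc (q * r ^ j) (B (D z)))" by simp
  then show ?thesis using s0 by (simp add: \<omega>_def)
qed

lemma eig_pow:
  assumes "H z = sc q (B z)" shows "H ((D ^^ k) z) = sc (q * \<omega> ^ k) (B ((D ^^ k) z))"
  by (induct k) (auto simp: assms mult.assoc dest: eig_shift)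

lemma eig_zero:
  assumes "l < m" "H z = sc (\<omega> ^ l) (B z)" shows "z = 0"
proof -
  define w where "w = (D ^^ (m - l)) z"
  have "H w = sc (\<omega> ^ l * \<omega> ^ (m - l)) (B w)" unfolding w_def by (rule eig_pow[OF assms(2)])
  also have "\<omega> ^ l * \<omega> ^ (m - l) = 1" using assms(1) \<omega>m by (simp add: power_add[symmetric])
  finally have "U (D w) = 0" by (simp add: H_def)
  then have "w = 0" by (auto dest: U_inj D_inj)
  then show ?thesis unfolding w_def by (rule Dpow_inj)
qed

definition S :: "complex \<Rightarrow> 'm \<Rightarrow> nat \<Rightarrow> 'm" where
  "S q x n = (\<Sum>k<n. sc (q ^ (n - 1 - k)) ((H ^^ k) ((B ^^ (n - 1 - k)) x)))"

lemma S_rec: "S q x (Suc n) = (H ^^ n) x + sc q (B (S q x n))"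
proof -
  have "sc q (B (S q x n)) = (\<Sum>k<n. sc (q ^ (Suc n - 1 - k)) ((H ^^ k) ((B ^^ (Suc n - 1 - k)) x)))"
    unfolding S_def
  proof (simp add: lin_sum[OF lin_B] scale_sum_right lin_sc[OF lin_B], rule sum.cong)
    fix k assume "k \<in> {..<n}"
    then have e: "n - k = Suc (n - Suc k)" by auto
    show "sc (q * q ^ (n - Suc k)) (B ((H ^^ k) ((B ^^ (n - Suc k)) x))) =
          sc (q ^ (n - k)) ((H ^^ k) ((B ^^ (n - k)) x))"
      by (simp only: e power_Suc funpow.simps o_apply Hpow_B)
  qed simp
  then show ?thesis by (simp add: S_def)
qed

lemma S_eq: "H (S q x n) - sc q (B (S q x n)) = (H ^^ n) x - sc (q ^ n) ((B ^^ n) x)"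
proof (induct n)
  case 0
  then show ?case by (simp add: S_def lin_zero[OF lin_H] lin_zero[OF lin_B])
next
  case (Suc n)
  have "H (S q x (Suc n)) - sc q (B (S q x (Suc n))) =
    (H ^^ Suc n) x - sc q (B ((H ^^ n) x)) + sc q (B (H (S q x n) - sc q (B (S q x n))))"
    by (simp add: S_rec lin_add[OF lin_H] lin_sc[OF lin_H] lin_add[OF lin_B] lin_sc[OF lin_B]
        lin_diff[OF lin_B] H_B scale_right_diff_distrib algebra_simps)
  also have "\<dots> = (H ^^ Suc n) x - sc (q ^ Suc n) ((B ^^ Suc n) x)"
    by (simp add: Suc lin_diff[OF lin_B] lin_sc[OF lin_B] Hpow_B[symmetric] scale_right_diff_distrib
        funpow_swap1)
  finally show ?case .
qed

lemma S_zero: "l < m \<Longrightarrow> S (\<omega> ^ l) x m = 0"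
proof -
  assume l: "l < m"
  have "(\<omega> ^ l) ^ m = 1" using \<omega>m by (metis power_mult mult.commute power_one)
  then have "H (S (\<omega> ^ l) x m) - sc (\<omega> ^ l) (B (S (\<omega> ^ l) x m)) = 0"
    by (simp add: S_eq HmBm)
  then show ?thesis using l by (intro eig_zero[of l]) auto
qed

lemma geo: "e < m \<Longrightarrow> (\<Sum>l<m. (\<omega> ^ e) ^ l) = (if e = 0 then of_nat m else 0)"
proof -
  assume e: "e < m"
  show ?thesis
  proof (cases "e = 0")
    case False
    then have ne: "\<omega> ^ e \<noteq> 1" using \<omega>prim e by auto
    have "(\<omega> ^ e) ^ m = 1" using \<omega>m by (metis power_mult mult.commute power_one)
    then show ?thesis using geometric_sum[OF ne, of m] False by simp
  qed simp
qed

lemma Hm1_zero: "(H ^^ (m - 1)) x = 0"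
proof -
  define v where "v k = (H ^^ k) ((B ^^ (m - 1 - k)) x)" for k
  have "0 = (\<Sum>l<m. S (\<omega> ^ l) x m)" using S_zero by simp
  also have "\<dots> = (\<Sum>l<m. \<Sum>k<m. sc ((\<omega> ^ (m - 1 - k)) ^ l) (v k))"
    unfolding S_def v_def by (simp add: power_mult[symmetric] mult.commute)
  also have "\<dots> = (\<Sum>k<m. sc (\<Sum>l<m. (\<omega> ^ (m - 1 - k)) ^ l) (v k))"
    by (subst sum.swap) (simp add: scale_sum_left)
  also have "\<dots> = (\<Sum>k<m. sc (if k = m - 1 then of_nat m else 0) (v k))"
    by (rule sum.cong) (auto simp: geo)
  also have "\<dots> = sc (of_nat m) (v (m - 1))"
    using m_pos by (simp add: if_distrib[of "\<lambda>a. sc a _"] sum.delta cong: if_cong)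
  finally have "sc (of_nat m) (v (m - 1)) = 0" by simp
  then show ?thesis using m_pos by (simp add: v_def)
qed

lemma contradiction: False
proof -
  obtain y :: 'm where y: "y \<noteq> 0" using nz by blast
  obtain k where k: "m = Suc k" using m_pos by (cases m) auto
  have "(H ^^ m) y = 0" using Hm1_zero[of y] k by (simp add: lin_zero[OF lin_H])
  then have "(B ^^ m) y = 0" by (simp add: HmBm)
  then show False using y by (auto dest: Bpow_inj)
qed

end

lemma result: "(\<forall>x. (U ^^ m) x = 0) \<or> (\<forall>x. (D ^^ m) x = 0)"
proof -
  { assume u: "\<forall>x. (U ^^ m) x = 0 \<longrightarrow> x = 0" and d: "\<forall>x. (D ^^ m) x = 0 \<longrightarrow> x = 0"
    obtain k where k: "m = Suc k" using m_pos by (cases m) auto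
    have ui: "U x = 0 \<Longrightarrow> x = 0" for x
      using u k by (auto simp: funpow_Suc_right lin_zero[OF lin_pow[OF lin_U]] simp del: funpow.simps)
    have di: "D x = 0 \<Longrightarrow> x = 0" for x
      using d k by (auto simp: funpow_Suc_right lin_zero[OF lin_pow[OF lin_D]] simp del: funpow.simps)
    have False using contradiction[OF ui di] by blast }
  then show ?thesis using U_case D_case by blast
qed

end

lemma poly_op_monom:
  assumes "vector_space sc"
  shows "poly_op sc (monom c k) T x = sc c ((T ^^ k) x)"
proof -
  interpret vector_space sc by fact
  show ?thesis
  proof (cases "c = 0")
    case True
    then show ?thesis by (simp add: poly_op_def)
  next
    case False
    have "poly_op sc (monom c k) T x = (\<Sum>i\<le>k. sc (if k = i then c else 0) ((T ^^ i) x))"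
      by (simp add: poly_op_def degree_monom_eq[OF False])
    also have "\<dots> = (\<Sum>i\<le>k. if k = i then sc c ((T ^^ i) x) else 0)"
      by (rule sum.cong) auto
    also have "\<dots> = sc c ((T ^^ k) x)" by (simp add: sum.delta)
    finally show ?thesis .
  qed
qed

theorem mainTheorem12:
  fixes sc :: "complex \<Rightarrow> 'm::ab_group_add \<Rightarrow> 'm"
    and phi psi :: "complex poly"
    and r s C :: complex
    and j m :: nat
    and U D Hh :: "'m \<Rightarrow> 'm"
  assumes r0: "r \<noteq> 0" and s0: "s \<noteq> 0"
    and conformal: "\<forall>x. s * poly psi x - poly psi (r * x) = poly phi x"
    and not_both_roots: "\<not> (root_of_unity r \<and> root_of_unity s)"
    and m_pos: "m > 0"
    and S_gen: "S_rs r s = {(n * int (j * m), n * int m) | n. True}"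
    and psi_eq: "psi = monom C j" and C0: "C \<noteq> 0"
    and simple: "simple_downup_module sc phi r s U D Hh"
    and hM: "surj Hh"
    and HM: "surj (\<lambda>x. U (D x) + poly_op sc psi Hh x)"
    and ann: "\<forall>x. ((\<lambda>y. U (D y) + poly_op sc psi Hh y) ^^ m) x
                  = sc (C ^ m) ((Hh ^^ (j * m)) x)"
  shows "(\<forall>x. (U ^^ m) x = 0) \<or> (\<forall>x. (D ^^ m) x = 0)"
proof -
  have dm: "downup_module sc phi r s U D Hh" and nz: "\<exists>x::'m. x \<noteq> 0"
    and sim: "\<And>N. module.subspace sc N \<Longrightarrow> U ` N \<subseteq> N \<Longrightarrow> D ` N \<subseteq> N \<Longrightarrow> Hh ` N \<subseteq> N
          \<Longrightarrow> N = {0} \<or> N = UNIV"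
    using simple unfolding simple_downup_module_def by auto
  have vs: "vector_space sc" and lU: "Vector_Spaces.linear sc sc U"
    and lD: "Vector_Spaces.linear sc sc D" and lH: "Vector_Spaces.linear sc sc Hh"
    and hu: "\<And>x. Hh (U x) = sc r (U (Hh x))" and dh: "\<And>x. D (Hh x) = sc r (Hh (D x))"
    and du0: "\<And>x. D (U x) - sc s (U (D x)) = poly_op sc phi Hh x"
    using dm unfolding downup_module_def by auto
  have "poly phi = poly (monom (C * (s - r ^ j)) j)"
  proof
    fix x
    show "poly phi x = poly (monom (C * (s - r ^ j)) j) x"
      using conformal[rule_format, of x] by (simp add: psi_eq poly_monom power_mult_distrib algebra_simps)
  qed
  then have phi_eq: "phi = monom (C * (s - r ^ j)) j" by (simp add: poly_eq_poly_eq_iff)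
  have psi_op: "poly_op sc psi Hh y = sc C ((Hh ^^ j) y)" for y
    by (simp add: psi_eq poly_op_monom[OF vs])
  have du: "D (U x) - sc s (U (D x)) = sc (C * (s - r ^ j)) ((Hh ^^ j) x)" for x
    using du0[of x] by (simp add: phi_eq poly_op_monom[OF vs])
  have annx: "((\<lambda>y. U (D y) + sc C ((Hh ^^ j) y)) ^^ m) x = sc (C ^ m) ((Hh ^^ (j * m)) x)" for x
  proof -
    have "(\<lambda>y. U (D y) + sc C ((Hh ^^ j) y)) = (\<lambda>y. U (D y) + poly_op sc psi Hh y)"
      by (simp add: psi_op)
    then show ?thesis using ann by simp
  qed
  have "(int (j * m), int m) \<in> S_rs r s" unfolding S_gen by (intro CollectI exI[of _ 1]) simp
  then have "r powi int (j * m) = s powi int m" unfolding S_rs_def by simp_all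
  then have rm: "r ^ (j * m) = s ^ m" by (simp only: power_int_of_nat)
  have prim: "r ^ (j * k) \<noteq> s ^ k" if k: "0 < k" "k < m" for k
  proof
    assume "r ^ (j * k) = s ^ k"
    then have "r powi int (j * k) = s powi int k" by (simp only: power_int_of_nat)
    then have "(int (j * k), int k) \<in> S_rs r s" unfolding S_rs_def by simp
    then obtain n where n: "int k = n * int m" unfolding S_gen by auto
    have "n > 0" using n k m_pos by (metis of_nat_0_less_iff zero_less_mult_pos2 of_nat_0_less_iff)
    then have "n * int m \<ge> int m" using m_pos by simp
    then show False using n k(2) by linarith
  qed
  have lin3: "(\<forall>x y. U (x + y) = U x + U y) \<and> (\<forall>a x. U (sc a x) = sc a (U x)) \<and>
      (\<forall>x y. D (x + y) = D x + D y) \<and> (\<forall>a x. D (sc a x) = sc a (D x)) \<and>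
      (\<forall>x y. Hh (x + y) = Hh x + Hh y) \<and> (\<forall>a x. Hh (sc a x) = sc a (Hh x))"
  proof -
    interpret lu: Vector_Spaces.linear sc sc U by (rule lU)
    interpret ld: Vector_Spaces.linear sc sc D by (rule lD)
    interpret lh: Vector_Spaces.linear sc sc Hh by (rule lH)
    show ?thesis using lu.add lu.scale ld.add ld.scale lh.add lh.scale by blast
  qed
  interpret dmod sc U D Hh r s C j m
    by unfold_locales (use vs r0 s0 C0 hu dh du annx m_pos rm prim sim nz hM lin3 in
        \<open>auto simp: vector_space_def module_def\<close>)
  show ?thesis by (rule result)
qed

end
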